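(* Let $n,d\in\mathbb{Z}_+$ and $m=\tfrac{n^2+n+2}{2}$. Consider $n+md$ qubits, split as an $n$-qubit register holding $x=(x_0,\dots,x_{n-1})\in\mathbb{F}_2^n$, a $d$-qubit register holding $y=(y_0,\dots,y_{d-1})\in\mathbb{F}_2^d$, and $(m-1)d$ ancilla qubits. Let $U_{\mathrm{QUBO}}$ be any unitary with $$U_{\mathrm{QUBO}}\ket{x}\ket{y}\ket{0}^{\otimes(m-1)d}=\ket{x}\ket{y}\bigotimes_{j=0}^{n-1}\bigotimes_{a=0}^{d-1}\Big(\ket{y_a\oplus x_j}\bigotimes_{k=j+1}^{n-1}\ket{y_a\oplus x_j\oplus x_k}\Big)$$ for all $x,y$. Then such a $U_{\mathrm{QUBO}}$ can be implemented by a quantum circuit consisting only of CNOT gates, of depth $O(\log_2(n)+\log_2(d))$.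
   Context: $\oplus$ denotes addition modulo 2 (XOR). $\ket{x}=\ket{x_0}\cdots\ket{x_{n-1}}$ denotes the computational basis state of a bit string. *)

theory Defs
  imports Complex_Main
begin

text \<open>Computational basis states of an N-qubit register are bit strings (bool lists of
  length N, the i-th entry being the value of qubit i, in tensor-product order).\<close>

type_synonym state = "bool list \<Rightarrow> complex"

definition ket :: "bool list \<Rightarrow> state" where
  "ket s = (\<lambda>t. if t = s then 1 else 0)"

definition bxor :: "bool \<Rightarrow> bool \<Rightarrow> bool" (infixl "\<oplus>\<^sub>2" 65) where
  "a \<oplus>\<^sub>2 b = (a \<noteq> b)"

type_synonym cnot_gate = "nat \<times> nat"

definition cnot_bits :: "cnot_gate \<Rightarrow> bool list \<Rightarrow> bool list" where
  "cnot_bits g s = (case g of (c, t) \<Rightarrow> s[t := (s ! t) \<oplus>\<^sub>2 (s ! c)])"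

text \<open>The unitary of a CNOT gate: the linear extension of |s> \<mapsto> |cnot_bits g s>.
  Since CNOT is an involution, (U psi)(s) = psi (cnot_bits g s).\<close>

definition cnot_unitary :: "cnot_gate \<Rightarrow> state \<Rightarrow> state" where
  "cnot_unitary g \<psi> = (\<lambda>s. \<psi> (cnot_bits g s))"

text \<open>A CNOT circuit is a list of layers; each layer is a list of CNOT gates acting on
  pairwise disjoint qubits (so they can be applied in parallel). The depth is the number
  of layers.\<close>

type_synonym cnot_circuit = "cnot_gate list list"

definition valid_layer :: "nat \<Rightarrow> cnot_gate list \<Rightarrow> bool" where
  "valid_layer N L \<longleftrightarrow>
     (\<forall>(c, t) \<in> set L. c < N \<and> t < N \<and> c \<noteq> t) \<and>
     distinct (concat (map (\<lambda>(c, t). [c, t]) L))"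

definition valid_cnot_circuit :: "nat \<Rightarrow> cnot_circuit \<Rightarrow> bool" where
  "valid_cnot_circuit N C \<longleftrightarrow> (\<forall>L \<in> set C. valid_layer N L)"

definition depth :: "cnot_circuit \<Rightarrow> nat" where
  "depth C = length C"

text \<open>Unitary of a circuit: the layers applied in order (first layer first), gates within a
  layer applied in list order (they commute as they act on disjoint qubits).\<close>

definition layer_unitary :: "cnot_gate list \<Rightarrow> state \<Rightarrow> state" where
  "layer_unitary L \<psi> = fold cnot_unitary L \<psi>"

definition circuit_unitary :: "cnot_circuit \<Rightarrow> state \<Rightarrow> state" where
  "circuit_unitary C \<psi> = fold layer_unitary C \<psi>"

text \<open>m = (n^2+n+2)/2 (always an integer).\<close>

definition qubo_m :: "nat \<Rightarrow> nat" where
  "qubo_m n = (n^2 + n + 2) div 2"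

definition qubo_out :: "bool list \<Rightarrow> bool list \<Rightarrow> bool list" where
  "qubo_out xs ys =
     concat (map (\<lambda>j. concat (map (\<lambda>a.
        ((ys ! a) \<oplus>\<^sub>2 (xs ! j)) #
        map (\<lambda>k. (ys ! a) \<oplus>\<^sub>2 (xs ! j) \<oplus>\<^sub>2 (xs ! k)) [j+1..<length xs])
       [0..<length ys])) [0..<length xs])"

end

theory Submission
  imports Defs
begin

definition fsem :: "cnot_gate \<Rightarrow> (nat \<Rightarrow> bool) \<Rightarrow> (nat \<Rightarrow> bool)" where
  "fsem g f = (case g of (c,t) \<Rightarrow> f(t := (f t \<noteq> f c)))"

abbreviation run :: "cnot_gate list \<Rightarrow> (nat \<Rightarrow> bool) \<Rightarrow> (nat \<Rightarrow> bool)" where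
  "run gs f \<equiv> fold fsem gs f"

lemma fsem_inv: "fst g \<noteq> snd g \<Longrightarrow> fsem g (fsem g f) = f"
  by (cases g) (auto simp: fsem_def fun_eq_iff)

lemma run_rev_inv: "\<forall>g\<in>set gs. fst g \<noteq> snd g \<Longrightarrow> run (rev gs) (run gs f) = f"
  by (induction gs arbitrary: f) (auto simp: fsem_inv)

lemma run_inv2: "\<forall>g\<in>set gs. fst g \<noteq> snd g \<Longrightarrow> run gs (run (rev gs) f) = f"
  using run_rev_inv[of "rev gs"] by simp

lemma run_linear: "run gs (\<lambda>p. a p \<noteq> b p) = (\<lambda>p. run gs a p \<noteq> run gs b p)"
proof (induction gs arbitrary: a b)
  case Nil then show ?case by simp
next
  case (Cons g gs)
  have "fsem g (\<lambda>p. a p \<noteq> b p) = (\<lambda>p. fsem g a p \<noteq> fsem g b p)"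
    by (cases g) (auto simp: fsem_def fun_eq_iff)
  then show ?case using Cons by simp
qed

lemma run_notarget: "p \<notin> snd ` set gs \<Longrightarrow> run gs f p = f p"
proof (induction gs arbitrary: f)
  case Nil then show ?case by simp
next
  case (Cons g gs) then show ?case by (cases g) (auto simp: fsem_def)
qed

lemma layer_par1:
  assumes "distinct (map fst L @ map snd L)" "(c,p) \<in> set L"
  shows "run L f p = (f p \<noteq> f c)"
  using assms
proof (induction L arbitrary: f)
  case Nil then show ?case by simp
next
  case (Cons g L)
  obtain c' t' where g: "g = (c',t')" by (cases g)
  show ?case
  proof (cases "(c,p) = g")
    case True
    then have "p \<notin> snd ` set L" "c \<noteq> p" using Cons.prems g by (auto simp: image_iff)
    then have "run L (fsem g f) p = fsem g f p" using run_notarget by blast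
    then have "run (g#L) f p = fsem g f p" by simp
    also have "\<dots> = (f p \<noteq> f c)" using True g \<open>c \<noteq> p\<close> by (simp add: fsem_def)
    finally show ?thesis .
  next
    case False
    then have inL: "(c,p) \<in> set L" using Cons.prems by auto
    have d: "distinct (map fst L @ map snd L)" using Cons.prems by auto
    have "p \<noteq> t'" "c \<noteq> t'" using Cons.prems inL g by (auto simp: image_iff)
    have "run (g#L) f p = run L (fsem g f) p" by simp
    also have "\<dots> = (fsem g f p \<noteq> fsem g f c)" using Cons.IH[OF d inL] by blast
    also have "\<dots> = (f p \<noteq> f c)" using \<open>p \<noteq> t'\<close> \<open>c \<noteq> t'\<close> g by (simp add: fsem_def)
    finally show ?thesis .
  qed
qed

lemma layer_par2: "p \<notin> snd ` set L \<Longrightarrow> run L f p = f p"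
  by (rule run_notarget)

lemma valid_layerI:
  assumes "\<forall>(c,t)\<in>set L. c < N \<and> t < N" "distinct (map fst L @ map snd L)"
  shows "valid_layer N L"
proof -
  have "distinct (concat (map (\<lambda>(c, t). [c, t]) L)) \<and> (\<forall>(c,t)\<in>set L. c \<noteq> t)"
    using assms(2)
  proof (induction L)
    case Nil then show ?case by simp
  next
    case (Cons g L)
    obtain c t where g: "g = (c,t)" by (cases g)
    have s: "set (concat (map (\<lambda>(c, t). [c, t]) L)) = fst ` set L \<union> snd ` set L"
      by (induction L) auto
    show ?case using Cons g s by (auto simp: image_iff)
  qed
  then show ?thesis using assms(1) unfolding valid_layer_def by auto
qed

lemma valid_layer_neq: "valid_layer N L \<Longrightarrow> g \<in> set L \<Longrightarrow> fst g \<noteq> snd g"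
  unfolding valid_layer_def by auto

lemma cnot_bits_invol: "c \<noteq> t \<Longrightarrow> cnot_bits (c,t) (cnot_bits (c,t) s) = s"
  by (cases "t < length s") (auto simp: cnot_bits_def bxor_def nth_list_update list_eq_iff_nth_eq)

lemma cnot_unitary_ket: "fst g \<noteq> snd g \<Longrightarrow> cnot_unitary g (ket s) = ket (cnot_bits g s)"
  apply (cases g)
  apply (auto simp: cnot_unitary_def ket_def fun_eq_iff)
  apply (metis cnot_bits_invol)+
  done

lemma fold_concat: "fold f (concat xs) = fold (fold f) xs"
  by (induction xs) auto

lemma circuit_ket:
  assumes "\<forall>L\<in>set C. \<forall>g\<in>set L. fst g \<noteq> snd g"
  shows "circuit_unitary C (ket s) = ket (fold cnot_bits (concat C) s)"
proof -
  have "fold cnot_unitary gs (ket s) = ket (fold cnot_bits gs s)" if "\<forall>g\<in>set gs. fst g \<noteq> snd g" for gs s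
    using that by (induction gs arbitrary: s) (auto simp: cnot_unitary_ket)
  moreover have "circuit_unitary C \<psi> = fold cnot_unitary (concat C) \<psi>" for \<psi>
    unfolding circuit_unitary_def layer_unitary_def fold_concat
    by (simp add: fun_eq_iff) 
  ultimately show ?thesis using assms by auto
qed

lemma fold_cnot_nth:
  assumes "\<forall>(c,t)\<in>set gs. c < length s \<and> t < length s" "\<forall>i<length s. f i = s ! i"
  shows "length (fold cnot_bits gs s) = length s \<and> (\<forall>i<length s. fold cnot_bits gs s ! i = run gs f i)"
  using assms
proof (induction gs arbitrary: s f)
  case Nil then show ?case by simp
next
  case (Cons g gs)
  obtain c t where g: "g = (c,t)" by (cases g)
  let ?s = "cnot_bits g s"
  have l: "length ?s = length s" by (simp add: g cnot_bits_def)
  have e: "\<forall>i<length ?s. fsem g f i = ?s ! i"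
    using Cons.prems g by (auto simp: cnot_bits_def fsem_def nth_list_update bxor_def)
  have "\<forall>(c,t)\<in>set gs. c < length ?s \<and> t < length ?s" using Cons.prems l by auto
  from Cons.IH[OF this e] l show ?case by simp
qed


definition TLJ :: "nat \<Rightarrow> (nat \<Rightarrow> nat list) \<Rightarrow> nat \<Rightarrow> nat \<Rightarrow> (nat \<times> nat) list" where
  "TLJ G P B r = filter (\<lambda>(g,i). 2^r \<le> i \<and> i < 2*2^r \<and> i < length (P g)) (List.product [0..<G] [0..<B])"

definition TL :: "nat \<Rightarrow> (nat \<Rightarrow> nat list) \<Rightarrow> nat \<Rightarrow> nat \<Rightarrow> cnot_gate list" where
  "TL G P B r = map (\<lambda>(g,i). (P g ! (i - 2^r), P g ! i)) (TLJ G P B r)"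

definition IL :: "nat \<Rightarrow> (nat \<Rightarrow> nat) \<Rightarrow> (nat \<Rightarrow> nat list) \<Rightarrow> cnot_gate list" where
  "IL G src P = map (\<lambda>g. (src g, P g ! 0)) (filter (\<lambda>g. P g \<noteq> []) [0..<G])"

definition PHI :: "nat \<Rightarrow> (nat \<Rightarrow> nat list) \<Rightarrow> nat \<Rightarrow> nat \<Rightarrow> cnot_circuit" where
  "PHI G P B R = map (TL G P B) [0..<R]"

definition phase :: "nat \<Rightarrow> (nat \<Rightarrow> nat) \<Rightarrow> (nat \<Rightarrow> nat list) \<Rightarrow> nat \<Rightarrow> nat \<Rightarrow> cnot_circuit" where
  "phase G src P B R = rev (map rev (PHI G P B R)) @ [IL G src P] @ PHI G P B R"

locale grp =
  fixes G :: nat and src :: "nat \<Rightarrow> nat" and P :: "nat \<Rightarrow> nat list" and B R :: nat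
  assumes H1: "\<And>g. g < G \<Longrightarrow> distinct (P g)"
    and H2: "\<And>g g'. g < G \<Longrightarrow> g' < G \<Longrightarrow> g \<noteq> g' \<Longrightarrow> set (P g) \<inter> set (P g') = {}"
    and H3: "\<And>g g'. g < G \<Longrightarrow> g' < G \<Longrightarrow> src g \<notin> set (P g')"
    and H4: "\<And>g. g < G \<Longrightarrow> length (P g) \<le> B"
    and H5: "B \<le> 2^R"
    and H6: "inj_on src {..<G}"
begin

lemma K: assumes "g < G" "g' < G" "i < length (P g)" "i' < length (P g')" "P g ! i = P g' ! i'"
  shows "g = g' \<and> i = i'"
proof -
  have "g = g'"
  proof (rule ccontr)
    assume "g \<noteq> g'"
    then show False using H2[OF assms(1,2)] assms(3-5) by (metis disjoint_iff nth_mem)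
  qed
  then show ?thesis using H1[OF assms(1)] assms(3-5) nth_eq_iff_index_eq by blast
qed

lemma set_TLJ: "set (TLJ G P B r) = {(g,i). g < G \<and> 2^r \<le> i \<and> i < 2*2^r \<and> i < length (P g)}"
proof -
  have "\<And>g i. g<G \<Longrightarrow> i < length (P g) \<Longrightarrow> i < B" using H4 less_le_trans by blast
  then show ?thesis unfolding TLJ_def by auto
qed

lemma set_TL: "(c,p) \<in> set (TL G P B r) \<longleftrightarrow>
   (\<exists>g i. g < G \<and> 2^r \<le> i \<and> i < 2*2^r \<and> i < length (P g) \<and> c = P g ! (i - 2^r) \<and> p = P g ! i)"
  unfolding TL_def set_map set_TLJ by auto

lemma TL_dist: "distinct (map fst (TL G P B r) @ map snd (TL G P B r))"
proof -
  let ?J = "TLJ G P B r"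
  have dJ: "distinct ?J" unfolding TLJ_def by (intro distinct_filter distinct_product) simp_all
  have m1: "map fst (TL G P B r) = map (\<lambda>(g,i). P g ! (i - 2^r)) ?J" unfolding TL_def by (auto simp: case_prod_beta)
  have m2: "map snd (TL G P B r) = map (\<lambda>(g,i). P g ! i) ?J" unfolding TL_def by (auto simp: case_prod_beta)
  have i1: "inj_on (\<lambda>(g,i). P g ! (i - 2^r)) (set ?J)"
  proof (rule inj_onI, clarsimp simp: set_TLJ)
    fix g i g' i' assume a: "g < G" "2 ^ r \<le> i" "i < 2 * 2 ^ r" "i < length (P g)" "g' < G" "2 ^ r \<le> i'"
      "i' < 2 * 2 ^ r" "i' < length (P g')" "P g ! (i - 2 ^ r) = P g' ! (i' - 2 ^ r)"
    then have "g = g' \<and> i - 2^r = i' - 2^r" using K[of g g' "i - 2^r" "i' - 2^r"] by auto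
    then show "g = g' \<and> i = i'" using a by auto
  qed
  have i2: "inj_on (\<lambda>(g,i). P g ! i) (set ?J)"
    by (rule inj_onI, clarsimp simp: set_TLJ) (use K in blast)
  have dis: "P g ! (i - 2^r) \<noteq> P g' ! i'" if "(g,i) \<in> set ?J" "(g',i') \<in> set ?J" for g i g' i'
  proof
    assume "P g ! (i - 2^r) = P g' ! i'"
    with that K[of g g' "i - 2^r" i'] show False by (auto simp: set_TLJ)
  qed
  show ?thesis unfolding m1 m2 using dJ i1 i2 dis by (auto simp: distinct_map)
qed

lemma IL_dist: "distinct (map fst (IL G src P) @ map snd (IL G src P))"
proof -
  have i2: "inj_on (\<lambda>g. P g ! 0) {g. g < G \<and> P g \<noteq> []}"
  proof (rule inj_onI)
    fix x y assume "x \<in> {g. g < G \<and> P g \<noteq> []}" "y \<in> {g. g < G \<and> P g \<noteq> []}" "P x ! 0 = P y ! 0"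
    then show "x = y" using K[of x y 0 0] by auto
  qed
  have "inj_on src {g. g < G \<and> P g \<noteq> []}" using H6 by (auto simp: inj_on_def)
  moreover have "src g \<noteq> P g' ! 0" if "g < G" "g' < G" "P g' \<noteq> []" for g g'
    using H3[OF that(1,2)] that(3) by (metis length_greater_0_conv nth_mem)
  ultimately show ?thesis using i2 unfolding IL_def by (auto simp: distinct_map comp_def)
qed

lemma set_IL: "(c,p) \<in> set (IL G src P) \<longleftrightarrow> (\<exists>g<G. P g \<noteq> [] \<and> c = src g \<and> p = P g ! 0)"
  unfolding IL_def by auto

definition D :: "(nat \<Rightarrow> bool) \<Rightarrow> nat \<Rightarrow> nat \<Rightarrow> bool" where
  "D v r p = (\<exists>g<G. \<exists>i<length (P g). i < 2^r \<and> p = P g ! i \<and> v g)"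

lemma D_step: "run (TL G P B r) (D v r) = D v (Suc r)"
proof
  fix p
  show "run (TL G P B r) (D v r) p = D v (Suc r) p"
  proof (cases "p \<in> snd ` set (TL G P B r)")
    case True
    then obtain c where cp: "(c,p) \<in> set (TL G P B r)" by force
    then obtain g i where gi: "g < G" "2^r \<le> i" "i < 2*2^r" "i < length (P g)" "c = P g ! (i - 2^r)" "p = P g ! i"
      using set_TL by blast
    have r: "run (TL G P B r) (D v r) p = (D v r p \<noteq> D v r c)" by (rule layer_par1[OF TL_dist cp])
    have "\<not> D v r p" unfolding D_def using gi K by (metis leD)
    moreover have "D v r c = v g"
    proof
      assume "D v r c"
      then obtain g' i' where "g' < G" "i' < length (P g')" "c = P g' ! i'" "v g'" unfolding D_def by blast
      moreover have "i - 2^r < length (P g)" using gi by linarith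
      ultimately show "v g" using K[of g g' "i - 2^r" i'] gi by auto
    next
      assume "v g"
      moreover have "i - 2^r < length (P g)" "i - 2^r < 2^r" using gi by linarith+
      ultimately show "D v r c" unfolding D_def using gi by blast
    qed
    moreover have "D v (Suc r) p = v g" unfolding D_def using gi K by auto
    ultimately show ?thesis using r by simp
  next
    case False
    have r: "run (TL G P B r) (D v r) p = D v r p" by (rule layer_par2[OF False])
    have "D v r p = D v (Suc r) p"
    proof
      assume "D v (Suc r) p"
      then obtain g i where gi: "g < G" "i < length (P g)" "i < 2^Suc r" "p = P g ! i" "v g" unfolding D_def by blast
      have "i < 2^r"
      proof (rule ccontr)
        assume "\<not> i < 2^r"
        then have "(P g ! (i - 2^r), p) \<in> set (TL G P B r)" unfolding set_TL
          using gi by (intro exI[of _ g] exI[of _ i]) auto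
        then show False using False by force
      qed
      then show "D v r p" using gi unfolding D_def by blast
    next
      assume "D v r p"
      then obtain g i where gi: "g < G" "i < length (P g)" "i < 2^r" "p = P g ! i" "v g" unfolding D_def by blast
      then have "i < 2^Suc r" by simp
      then show "D v (Suc r) p" using gi unfolding D_def by blast
    qed
    then show ?thesis using r by simp
  qed
qed

lemma D_run: "run (concat (PHI G P B R')) (D v 0) = D v R'"
proof (induction R')
  case 0 then show ?case by (simp add: PHI_def)
next
  case (Suc R') then show ?case by (simp add: PHI_def D_step)
qed

lemma D_R: "D v R = (\<lambda>p. \<exists>g<G. p \<in> set (P g) \<and> v g)"
proof -
  have "i < length (P g) \<Longrightarrow> g < G \<Longrightarrow> i < 2^R" for i g using H4 H5 by (meson less_le_trans)
  then have "(\<exists>g<G. \<exists>i<length (P g). i < 2^R \<and> p = P g ! i \<and> v g) = (\<exists>g<G. p \<in> set (P g) \<and> v g)" for p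
    unfolding in_set_conv_nth by blast
  then show ?thesis unfolding D_def by (simp add: fun_eq_iff)
qed

lemma PHI_targets: "g \<in> set (concat (PHI G P B R')) \<Longrightarrow> \<exists>g'<G. snd g \<in> set (P g')"
  unfolding PHI_def by (cases g) (auto simp: set_TL)

lemma PHI_neq: "g \<in> set (concat (PHI G P B R')) \<Longrightarrow> fst g \<noteq> snd g"
proof -
  assume "g \<in> set (concat (PHI G P B R'))"
  then obtain r where "g \<in> set (TL G P B r)" unfolding PHI_def by auto
  then show ?thesis using TL_dist[of r] by (cases g) (auto simp: image_iff)
qed

lemma phase_run: "run (concat (phase G src P B R)) f = (\<lambda>p. f p \<noteq> (\<exists>g<G. p \<in> set (P g) \<and> f (src g)))"
proof -
  let ?Phi = "concat (PHI G P B R)"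
  have cc: "concat (phase G src P B R) = rev ?Phi @ IL G src P @ ?Phi"
    unfolding phase_def by (simp add: rev_concat rev_map)
  define h where "h = run (rev ?Phi) f"
  have hs: "h (src g) = f (src g)" if "g < G" for g
  proof -
    have "src g \<notin> snd ` set (rev ?Phi)" using PHI_targets H3 that by fastforce
    then show ?thesis unfolding h_def by (rule run_notarget)
  qed
  let ?v = "\<lambda>g. f (src g)"
  have il: "run (IL G src P) h = (\<lambda>p. h p \<noteq> D ?v 0 p)"
  proof
    fix p
    show "run (IL G src P) h p = (h p \<noteq> D ?v 0 p)"
    proof (cases "p \<in> snd ` set (IL G src P)")
      case True
      then obtain c where cp: "(c,p) \<in> set (IL G src P)" by force
      then obtain g where g: "g < G" "P g \<noteq> []" "c = src g" "p = P g ! 0" using set_IL by blast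
      have "run (IL G src P) h p = (h p \<noteq> h c)" by (rule layer_par1[OF IL_dist cp])
      moreover have "D ?v 0 p = f (src g)"
      proof
        assume "D ?v 0 p"
        then obtain g' i' where "g' < G" "i' < length (P g')" "i' < 1" "p = P g' ! i'" "f (src g')" unfolding D_def by auto
        moreover have "0 < length (P g)" using g by simp
        ultimately show "f (src g)" using K[of g g' 0 i'] g by auto
      next
        assume "f (src g)"
        then show "D ?v 0 p" unfolding D_def using g by auto
      qed
      ultimately show ?thesis using g hs by simp
    next
      case False
      have "\<not> D ?v 0 p"
      proof
        assume "D ?v 0 p"
        then obtain g where "g < G" "P g \<noteq> []" "p = P g ! 0" unfolding D_def by auto
        then show False using False set_IL by force
      qed
      then show ?thesis using layer_par2[OF False] by simp
    qed
  qed
  have "run (concat (phase G src P B R)) f = run ?Phi (run (IL G src P) h)"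
    unfolding cc h_def by simp
  also have "\<dots> = (\<lambda>p. run ?Phi h p \<noteq> run ?Phi (D ?v 0) p)" unfolding il by (rule run_linear)
  also have "run ?Phi h = f" unfolding h_def by (rule run_inv2) (use PHI_neq in blast)
  also have "run ?Phi (D ?v 0) = D ?v R" by (rule D_run)
  finally show ?thesis unfolding D_R .
qed

lemma phase_len: "length (phase G src P B R) = 2 * R + 1"
  unfolding phase_def PHI_def by simp

lemma phase_valid:
  assumes "\<And>g. g < G \<Longrightarrow> src g < N" "\<And>g p. g < G \<Longrightarrow> p \<in> set (P g) \<Longrightarrow> p < N"
  shows "\<forall>L\<in>set (phase G src P B R). valid_layer N L"
proof -
  have "valid_layer N (TL G P B r)" for r
  proof (rule valid_layerI[OF _ TL_dist])
    show "\<forall>(c, t)\<in>set (TL G P B r). c < N \<and> t < N"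
      using assms(2) by (auto simp: set_TL)
  qed
  moreover have "valid_layer N (rev (TL G P B r))" for r
  proof (rule valid_layerI)
    show "\<forall>(c, t)\<in>set (rev (TL G P B r)). c < N \<and> t < N"
      using assms(2) by (auto simp: set_TL)
    show "distinct (map fst (rev (TL G P B r)) @ map snd (rev (TL G P B r)))"
      using TL_dist[of r] by (simp add: rev_map[symmetric])
  qed
  moreover have "valid_layer N (IL G src P)"
  proof (rule valid_layerI[OF _ IL_dist])
    show "\<forall>(c, t)\<in>set (IL G src P). c < N \<and> t < N"
      using assms by (auto simp: set_IL)
  qed
  ultimately show ?thesis unfolding phase_def PHI_def by auto
qed

end


definition FP :: "nat \<Rightarrow> nat \<Rightarrow> (nat \<Rightarrow> nat \<Rightarrow> bool) \<Rightarrow> nat \<Rightarrow> nat list" where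
  "FP base M sel g = map ((+) base) (filter (\<lambda>q. sel q g) [0..<M])"

lemma set_FP: "p \<in> set (FP base M sel g) \<longleftrightarrow> base \<le> p \<and> p < base + M \<and> sel (p - base) g"
  unfolding FP_def by force

lemma len_FP: "length (FP base M sel g) \<le> M"
  unfolding FP_def using length_filter_le[of _ "[0..<M]"] by simp

lemma fgrp:
  assumes "\<And>g. g < G \<Longrightarrow> src g < base" "inj_on src {..<G}"
    "\<And>q g g'. sel q g \<Longrightarrow> sel q g' \<Longrightarrow> g = g'" "M \<le> 2^R"
  shows "grp G src (FP base M sel) M R"
proof
  show "distinct (FP base M sel g)" for g unfolding FP_def by (simp add: distinct_map)
  show "set (FP base M sel g) \<inter> set (FP base M sel g') = {}" if "g \<noteq> g'" for g g'
    using that assms(3) by (auto simp: set_FP)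
  show "src g \<notin> set (FP base M sel g')" if "g < G" for g g'
    using assms(1)[OF that] by (auto simp: set_FP)
  show "length (FP base M sel g) \<le> M" for g by (rule len_FP)
qed (use assms in auto)

definition cells :: "nat \<Rightarrow> nat \<Rightarrow> (nat \<times> nat \<times> nat) list" where
  "cells n d = concat (map (\<lambda>j. concat (map (\<lambda>a. map (\<lambda>k. (j,a,k)) [j..<n]) [0..<d])) [0..<n])"

definition qval :: "bool list \<Rightarrow> bool list \<Rightarrow> nat \<times> nat \<times> nat \<Rightarrow> bool" where
  "qval xs ys c = (case c of (j,a,k) \<Rightarrow>
     if k = j then (ys ! a) \<oplus>\<^sub>2 (xs ! j) else (ys ! a) \<oplus>\<^sub>2 (xs ! j) \<oplus>\<^sub>2 (xs ! k))"

lemma qubo_out_cells: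
  assumes "length xs = n" "length ys = d"
  shows "qubo_out xs ys = map (qval xs ys) (cells n d)"
proof -
  have "map (qval xs ys) (map (\<lambda>k. (j,a,k)) [j..<n]) =
        ((ys ! a) \<oplus>\<^sub>2 (xs ! j)) # map (\<lambda>k. (ys ! a) \<oplus>\<^sub>2 (xs ! j) \<oplus>\<^sub>2 (xs ! k)) [j+1..<n]"
    if "j < n" for j a
    using that by (simp add: upt_conv_Cons qval_def)
  then have "map (qval xs ys) (concat (map (\<lambda>a. map (\<lambda>k. (j,a,k)) [j..<n]) [0..<d])) =
     concat (map (\<lambda>a. ((ys ! a) \<oplus>\<^sub>2 (xs ! j)) # map (\<lambda>k. (ys ! a) \<oplus>\<^sub>2 (xs ! j) \<oplus>\<^sub>2 (xs ! k)) [j+1..<n]) [0..<d])"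
    if "j < n" for j
    using that by (simp add: map_concat comp_def del: upt_Suc)
  then show ?thesis unfolding qubo_out_def cells_def assms map_concat
    by (intro arg_cong[where f=concat] map_cong) (auto simp del: upt_Suc simp: map_concat comp_def)
qed

lemma set_cells: "(j,a,k) \<in> set (cells n d) \<longleftrightarrow> j < n \<and> a < d \<and> j \<le> k \<and> k < n"
  unfolding cells_def by force

lemma sum_gauss: "2 * (\<Sum>j<n. n - j) = (n::nat) * (n + 1)"
proof (induction n)
  case 0 then show ?case by simp
next
  case (Suc n)
  have "(\<Sum>j<Suc n. Suc n - j) = (\<Sum>j<n. Suc n - j) + 1" by simp
  also have "(\<Sum>j<n. Suc n - j) = (\<Sum>j<n. (n - j) + 1)"
    by (rule sum.cong) auto
  also have "\<dots> = (\<Sum>j<n. n - j) + n"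
    by (subst sum.distrib) simp
  finally show ?case using Suc by (simp add: algebra_simps)
qed

lemma len_cells0: "length (cells n d) = d * (\<Sum>j<n. n - j)"
proof -
  have "length (cells n d) = (\<Sum>j<n. d * (n - j))"
    unfolding cells_def by (simp add: length_concat comp_def sum_set_upt_conv_sum_list_nat[symmetric] atLeast0LessThan)
  also have "\<dots> = d * (\<Sum>j<n. n - j)" by (simp add: sum_distrib_left)
  finally show ?thesis .
qed

lemma len_cells: "length (cells n d) = (qubo_m n - 1) * d"
proof -
  have "length (cells n d) = (\<Sum>j<n. d * (n - j))"
    unfolding cells_def by (simp add: length_concat comp_def sum_set_upt_conv_sum_list_nat[symmetric] atLeast0LessThan)
  also have "\<dots> = d * (\<Sum>j<n. n - j)" by (simp add: sum_distrib_left)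
  finally have l: "length (cells n d) = d * (\<Sum>j<n. n - j)" .
  have "qubo_m n = (\<Sum>j<n. n - j) + 1" unfolding qubo_m_def
    using sum_gauss[of n] by (simp add: power2_eq_square algebra_simps)
  then show ?thesis using l by simp
qed


lemma exp2: assumes "(n::nat) \<ge> 1" shows "\<exists>a. n \<le> 2^a \<and> 2^a < 2*n"
proof -
  define a where "a = (LEAST a. n \<le> 2^a)"
  have ex: "n \<le> 2^n" using less_exp[of n] by simp
  have na: "n \<le> 2^a" unfolding a_def by (rule LeastI[of _ n]) (rule ex)
  show ?thesis
  proof (cases a)
    case 0 then show ?thesis using na assms by (intro exI[of _ 0]) auto
  next
    case (Suc b)
    have "\<not> n \<le> 2^b" using not_less_Least[of b "\<lambda>a. n \<le> 2^a"] Suc unfolding a_def by simp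
    then show ?thesis using na Suc by (intro exI[of _ "Suc b"]) auto
  qed
qed

lemma loga: assumes "(n::nat) \<ge> 1" "2^a < 2*n" shows "real a \<le> log 2 (real n) + 1"
proof -
  have "(2::real) powr (real a) < 2 * real n"
    using assms(2) by (simp add: powr_realpow) (metis of_nat_less_iff of_nat_mult of_nat_numeral of_nat_power)
  then have "real a < log 2 (2 * real n)" using assms(1) by (subst less_log_iff) auto
  also have "log 2 (2 * real n) = log 2 (real n) + 1" using assms(1) by (simp add: log_mult)
  finally show ?thesis by simp
qed

theorem mainTheorem2:
  shows "\<exists>K::real. \<forall>n d :: nat. n \<ge> 1 \<longrightarrow> d \<ge> 1 \<longrightarrow>
    (\<exists>C :: cnot_circuit.
        valid_cnot_circuit (n + qubo_m n * d) C \<and>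
        real (depth C) \<le> K * (log 2 (real n) + log 2 (real d) + 1) \<and>
        (\<forall>xs ys. length xs = n \<longrightarrow> length ys = d \<longrightarrow>
           circuit_unitary C (ket (xs @ ys @ replicate ((qubo_m n - 1) * d) False))
             = ket (xs @ ys @ qubo_out xs ys)))"
proof (intro exI[of _ 21] allI impI)
  fix n d :: nat assume n1: "n \<ge> 1" and d1: "d \<ge> 1"
  obtain a where a: "n \<le> 2^a" "2^a < 2*n" using exp2[OF n1] by blast
  obtain b where b: "d \<le> 2^b" "2^b < 2*d" using exp2[OF d1] by blast
  define R where "R = 2*a + b"
  define M where "M = length (cells n d)"
  define base where "base = n + d"
  have MM: "M = (qubo_m n - 1) * d" unfolding M_def by (rule len_cells)
  have qm: "qubo_m n \<ge> 1" unfolding qubo_m_def by simp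
  have NN: "n + qubo_m n * d = base + M"
  proof -
    have "qubo_m n * d = d + (qubo_m n - 1) * d" using qm by (cases "qubo_m n") auto
    then show ?thesis unfolding MM base_def by simp
  qed
  have MR: "M \<le> 2^R"
  proof -
    have "2 * M = d * (2 * (\<Sum>j<n. n - j))" unfolding M_def len_cells0 by simp
    then have m2: "2 * M = d * (n * (n+1))" unfolding sum_gauss .
    have "n + 1 \<le> 2 * n" using n1 by simp
    then have "n * (n + 1) \<le> n * (2 * n)" by (rule mult_le_mono2)
    then have "d * (n * (n + 1)) \<le> d * (n * (2 * n))" by (rule mult_le_mono2)
    also have "d * (n * (2 * n)) = 2 * (d * (n * n))" by simp
    finally have "M \<le> d * (n * n)" using m2 by linarith
    also have "\<dots> \<le> 2^b * (2^a * 2^a)" using a b by (intro mult_le_mono mult_le_mono) auto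
    also have "\<dots> = 2^R" unfolding R_def by (simp only: power_add mult_2) (simp add: ac_simps)
    finally show ?thesis .
  qed
  define PY where "PY = FP base M (\<lambda>q g. fst (snd (cells n d ! q)) = g)"
  define PX where "PX = FP base M (\<lambda>q g. fst (cells n d ! q) = g)"
  define PZ where "PZ = FP base M (\<lambda>q g. snd (snd (cells n d ! q)) = g \<and> fst (cells n d ! q) \<noteq> g)"
  interpret gY: grp d "\<lambda>g. n + g" PY M R unfolding PY_def
    by (rule fgrp) (auto simp: base_def inj_on_def MR)
  interpret gX: grp n "\<lambda>g. g" PX M R unfolding PX_def
    by (rule fgrp) (auto simp: base_def inj_on_def MR)
  interpret gZ: grp n "\<lambda>g. g" PZ M R unfolding PZ_def
    by (rule fgrp) (auto simp: base_def inj_on_def MR)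
  define C where "C = phase d (\<lambda>g. n + g) PY M R @ phase n (\<lambda>g. g) PX M R @ phase n (\<lambda>g. g) PZ M R"
  have valid: "valid_cnot_circuit (base + M) C"
  proof -
    have "\<forall>L\<in>set (phase d (\<lambda>g. n + g) PY M R). valid_layer (base + M) L"
      by (rule gY.phase_valid) (auto simp: PY_def set_FP base_def)
    moreover have "\<forall>L\<in>set (phase n (\<lambda>g. g) PX M R). valid_layer (base + M) L"
      by (rule gX.phase_valid) (auto simp: PX_def set_FP base_def)
    moreover have "\<forall>L\<in>set (phase n (\<lambda>g. g) PZ M R). valid_layer (base + M) L"
      by (rule gZ.phase_valid) (auto simp: PZ_def set_FP base_def)
    ultimately show ?thesis unfolding valid_cnot_circuit_def C_def by auto
  qed
  have dep: "real (depth C) \<le> 21 * (log 2 (real n) + log 2 (real d) + 1)"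
  proof -
    have "depth C = 6 * R + 3" unfolding depth_def C_def by (simp add: gY.phase_len gX.phase_len gZ.phase_len)
    then have "real (depth C) = 12 * real a + 6 * real b + 3" unfolding R_def by simp
    moreover have "real a \<le> log 2 (real n) + 1" by (rule loga[OF n1 a(2)])
    moreover have "real b \<le> log 2 (real d) + 1" by (rule loga[OF d1 b(2)])
    moreover have "log 2 (real n) \<ge> 0" "log 2 (real d) \<ge> 0" using n1 d1 by auto
    ultimately show ?thesis unfolding distrib_left by linarith
  qed
  have sem: "circuit_unitary C (ket (xs @ ys @ replicate ((qubo_m n - 1) * d) False)) = ket (xs @ ys @ qubo_out xs ys)"
    if xs: "length xs = n" and ys: "length ys = d" for xs ys
  proof -
    define s0 where "s0 = xs @ ys @ replicate M False"
    define tg where "tg = xs @ ys @ qubo_out xs ys"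
    have s0eq: "xs @ ys @ replicate ((qubo_m n - 1) * d) False = s0" unfolding s0_def MM ..
    have ls0: "length s0 = base + M" unfolding s0_def base_def using xs ys by simp
    have ltg: "length tg = base + M" unfolding tg_def base_def M_def using xs ys
      by (simp add: qubo_out_cells[OF xs ys])
    have vl: "\<forall>L\<in>set C. valid_layer (base + M) L" using valid unfolding valid_cnot_circuit_def .
    have neq: "\<forall>L\<in>set C. \<forall>g\<in>set L. fst g \<noteq> snd g" using vl valid_layer_neq by blast
    have rng: "\<forall>(c,t)\<in>set (concat C). c < length s0 \<and> t < length s0"
      using vl unfolding ls0 valid_layer_def by fastforce
    have fc: "length (fold cnot_bits (concat C) s0) = length s0 \<and>
      (\<forall>i<length s0. fold cnot_bits (concat C) s0 ! i = run (concat C) (nth s0) i)"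
      by (rule fold_cnot_nth[OF rng]) simp
    define f0 where "f0 = nth s0"
    define f1 where "f1 = (\<lambda>p. f0 p \<noteq> (\<exists>g<d. p \<in> set (PY g) \<and> f0 (n + g)))"
    define f2 where "f2 = (\<lambda>p. f1 p \<noteq> (\<exists>g<n. p \<in> set (PX g) \<and> f1 g))"
    define f3 where "f3 = (\<lambda>p. f2 p \<noteq> (\<exists>g<n. p \<in> set (PZ g) \<and> f2 g))"
    have e: "run (concat C) (nth s0) = f3"
    proof -
      have "run (concat C) (nth s0) = run (concat (phase n (\<lambda>g. g) PZ M R))
         (run (concat (phase n (\<lambda>g. g) PX M R)) (run (concat (phase d (\<lambda>g. n + g) PY M R)) (nth s0)))"
        unfolding C_def by simp
      also have "\<dots> = f3" unfolding gY.phase_run gX.phase_run gZ.phase_run f3_def f2_def f1_def f0_def ..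
      finally show ?thesis .
    qed
    have low: "p \<notin> set (PY g) \<and> p \<notin> set (PX g) \<and> p \<notin> set (PZ g)" if "p < base" for p g
      using that unfolding PY_def PX_def PZ_def set_FP by simp
    have f2low: "f2 p = f0 p" "f1 p = f0 p" if "p < base" for p
      using low[OF that] unfolding f2_def f1_def by simp_all
    have key: "f3 i = tg ! i" if i: "i < base + M" for i
    proof (cases "i < base")
      case True
      then have "f3 i = f0 i" using low[OF True] f2low[OF True] unfolding f3_def by simp
      also have "f0 i = tg ! i" unfolding f0_def s0_def tg_def using True xs ys base_def
        by (auto simp: nth_append)
      finally show ?thesis .
    next
      case False
      define q where "q = i - base"
      have iq: "i = base + q" and qM: "q < M" using False i unfolding q_def by auto
      obtain j a k where c: "cells n d ! q = (j,a,k)" by (metis prod_cases3)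
      have "(j,a,k) \<in> set (cells n d)" using c qM unfolding M_def by (metis nth_mem)
      then have jak: "j < n" "a < d" "j \<le> k" "k < n" unfolding set_cells by auto
      have mY: "i \<in> set (PY g) \<longleftrightarrow> g = a" for g unfolding PY_def set_FP iq using qM c by auto
      have mX: "i \<in> set (PX g) \<longleftrightarrow> g = j" for g unfolding PX_def set_FP iq using qM c by auto
      have mZ: "i \<in> set (PZ g) \<longleftrightarrow> g = k \<and> j \<noteq> k" for g unfolding PZ_def set_FP iq using qM c by auto
      have bj: "j < base" "k < base" using jak base_def by auto
      have v0: "f0 i = False" unfolding f0_def s0_def iq base_def using xs ys qM by (simp add: nth_append)
      have vy: "f0 (n + a) = ys ! a" unfolding f0_def s0_def using xs ys jak by (simp add: nth_append)
      have vj: "f0 j = xs ! j" "f0 k = xs ! k" unfolding f0_def s0_def using xs ys jak by (simp_all add: nth_append)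
      have f3e: "f3 i = (f2 i \<noteq> (\<exists>g<n. i \<in> set (PZ g) \<and> f2 g))" unfolding f3_def ..
      have f2e: "f2 i = (f1 i \<noteq> (\<exists>g<n. i \<in> set (PX g) \<and> f1 g))" unfolding f2_def ..
      have f1e: "f1 i = (f0 i \<noteq> (\<exists>g<d. i \<in> set (PY g) \<and> f0 (n + g)))" unfolding f1_def ..
      have "f3 i = (((f0 i \<noteq> f0 (n + a)) \<noteq> f0 j) \<noteq> (j \<noteq> k \<and> f0 k))"
        unfolding f3e f2e f1e using mY mX mZ jak f2low[OF bj(1)] f2low[OF bj(2)]
        by auto
      also have "\<dots> = qval xs ys (j,a,k)" unfolding v0 vy vj qval_def bxor_def by auto
      also have "\<dots> = tg ! i" unfolding tg_def iq base_def qubo_out_cells[OF xs ys] using xs ys qM c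
        by (simp add: nth_append M_def)
      finally show ?thesis .
    qed
    have "fold cnot_bits (concat C) s0 = tg"
      by (rule nth_equalityI) (use fc ls0 ltg key e in auto)
    then show ?thesis unfolding s0eq circuit_ket[OF neq] tg_def by simp
  qed
  show "\<exists>C. valid_cnot_circuit (n + qubo_m n * d) C \<and>
        real (depth C) \<le> 21 * (log 2 (real n) + log 2 (real d) + 1) \<and>
        (\<forall>xs ys. length xs = n \<longrightarrow> length ys = d \<longrightarrow>
           circuit_unitary C (ket (xs @ ys @ replicate ((qubo_m n - 1) * d) False))
             = ket (xs @ ys @ qubo_out xs ys))"
    using valid dep sem NN by auto
qed

end
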